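(* For every $x>0$, $$x\,e^{-x^2/6}<\sqrt{2\pi}\Big(\Phi(x)-\frac12\Big)<x\,e^{-x^2/6+x^4/90}.$$
   Context: $\Phi$ is the standard normal distribution function. *)

theory Defs
  imports "HOL-Probability.Probability"
begin

definition std_normal_cdf :: "real \<Rightarrow> real" where
  "std_normal_cdf x = (LBINT t:{..x}. std_normal_density t)"

end

theory Submission
  imports Defs
begin

lemma si: "set_integrable lborel (A::real set) std_normal_density" if "A \<in> sets lborel"
  unfolding set_integrable_def by (rule integrable_mult_indicator[OF that]) auto

lemma half: "integral {..0} std_normal_density = 1/2" and ii: "std_normal_density integrable_on {..0}"
proof -
  have e1: "(LBINT t:{..0::real}. std_normal_density t) = (LBINT t:{0..}. std_normal_density t)"
    unfolding set_lebesgue_integral_def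
    apply (subst lborel_integral_real_affine[where c="-1" and t=0])
    by (auto simp: std_normal_density_def indicator_def intro!: Bochner_Integration.integral_cong)
  define A where "A = integral {..0} std_normal_density"
  have a1: "(std_normal_density has_integral A) {..0}"
    using set_borel_integral_eq_integral[OF si[of "{..0}"]] A_def by auto
  have a2: "(std_normal_density has_integral A) {0..}"
  proof -
    have "std_normal_density integrable_on {0..}" "(LBINT t:{0..}. std_normal_density t) = integral {0..} std_normal_density"
      "(LBINT t:{..0}. std_normal_density t) = integral {..0} std_normal_density"
      by (intro set_borel_integral_eq_integral si; simp)+
    then show ?thesis using A_def e1 by (metis integrable_integral)
  qed
  have "(std_normal_density has_integral (A + A)) ({..0} \<union> {0..})"
    by (rule has_integral_Un[OF a1 a2], rule negligible_subset[of "{0}"]) auto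
  moreover have "{..0::real} \<union> {0..} = UNIV" by auto
  ultimately have "(std_normal_density has_integral (A + A)) UNIV" by simp
  moreover have "(std_normal_density has_integral 1) UNIV"
    using has_integral_integral_lborel[OF integrable_normal_density[of 1 0]] integral_normal_density[of 1 0] by simp
  ultimately have "A + A = 1" using has_integral_unique by blast
  then show "integral {..0} std_normal_density = 1/2" using A_def by simp
  show "std_normal_density integrable_on {..0}" using a1 by blast
qed

lemma repr:
  assumes "x > 0"
  shows "sqrt (2*pi) * (std_normal_cdf x - 1/2) = integral {0..x} (\<lambda>t. exp (- t\<^sup>2 / 2))"
proof -
  have c: "(std_normal_density has_integral integral {0..x} std_normal_density) {0..x}"
    by (rule integrable_integral, rule integrable_continuous_real)
       (auto simp: std_normal_density_def intro!: continuous_intros)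
  have "(std_normal_density has_integral (1/2 + integral {0..x} std_normal_density)) ({..0} \<union> {0..x})"
    apply (rule has_integral_Un[OF _ c])
    using half ii apply (metis integrable_integral)
    by (rule negligible_subset[of "{0}"]) auto
  moreover have "{..0} \<union> {0..x} = {..x}" using assms by auto
  ultimately have "std_normal_cdf x = 1/2 + integral {0..x} std_normal_density"
    unfolding std_normal_cdf_def
    using set_borel_integral_eq_integral[OF si[of "{..x}"]] by (simp add: integral_unique)
  also have "integral {0..x} std_normal_density = integral {0..x} (\<lambda>t. exp (- t\<^sup>2 / 2)) / sqrt (2*pi)"
    unfolding std_normal_density_def integral_mult_left integral_mult_right by simp
  finally show ?thesis by simp
qed
lemma exp_strict: fixes u :: real assumes "u \<noteq> 0" shows "1 + u < exp u"
proof (cases "1 + u/2 \<ge> 0")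
  case True
  have "(1 + u/2)^2 \<le> exp (u/2) ^ 2"
    using True exp_ge_add_one_self[of "u/2"] by (intro power_mono) auto
  also have "exp (u/2) ^ 2 = exp u" by (simp add: power2_eq_square flip: exp_add)
  finally have a: "(1 + u/2)^2 \<le> exp u" .
  have "u*u > 0" using assms by (metis not_real_square_gt_zero)
  then have "1 + u < (1+u/2)^2" by (simp add: power2_eq_square algebra_simps)
  then show ?thesis using a by linarith
next
  case False
  then show ?thesis using exp_gt_zero[of u] by linarith
qed
lemma Fderiv:
  assumes "0 < y"
  shows "((\<lambda>z. integral {0..z} (\<lambda>t. exp (- t\<^sup>2 / 2))) has_real_derivative exp (- y\<^sup>2 / 2)) (at y)"
proof -
  have "((\<lambda>z. integral {0..z} (\<lambda>t. exp (- t\<^sup>2 / 2))) has_real_derivative exp (- y\<^sup>2 / 2)) (at y within {0..y+1})"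
    by (rule integral_has_real_derivative) (use assms in \<open>auto intro!: continuous_intros\<close>)
  moreover have "at y within {0..y+1} = at y"
    by (rule at_within_interior) (use assms in auto)
  ultimately show ?thesis by simp
qed

lemma Fcont: "continuous_on {0..x::real} (\<lambda>z. integral {0..z} (\<lambda>t. exp (- t\<^sup>2 / 2)))"
  by (rule indefinite_integral_continuous_1, rule integrable_continuous_real) (auto intro!: continuous_intros)


lemma lower:
  fixes x :: real assumes "x > 0"
  shows "x * exp (- x\<^sup>2 / 6) < integral {0..x} (\<lambda>t. exp (- t\<^sup>2 / 2))"
proof -
  let ?G = "\<lambda>z. integral {0..z} (\<lambda>t. exp (- t\<^sup>2 / 2)) - z * exp (- z\<^sup>2 / 6)"
  have "?G 0 < ?G x"
  proof (rule DERIV_pos_imp_increasing_open[OF assms])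
    fix y :: real assume y: "0 < y" "y < x"
    have d: "(?G has_real_derivative (exp (- y\<^sup>2 / 2) - (exp (- y\<^sup>2 / 6) - y * exp (- y\<^sup>2 / 6) * (y / 3)))) (at y)"
    proof -
      have "((\<lambda>z. z * exp (- z\<^sup>2 / 6)) has_real_derivative (exp (- y\<^sup>2 / 6) - y * exp (- y\<^sup>2 / 6) * (y / 3))) (at y)"
        by (auto intro!: derivative_eq_intros simp: power2_eq_square field_simps)
      from DERIV_diff[OF Fderiv[OF y(1)] this] show ?thesis .
    qed
    have e: "exp (- y\<^sup>2 / 2) = exp (- y\<^sup>2 / 6) * exp (- y\<^sup>2 / 3)"
      by (simp flip: exp_add)
    have "1 + (- y\<^sup>2/3) < exp (- y\<^sup>2 / 3)" using y by (intro exp_strict) auto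
    then have "exp (- y\<^sup>2 / 6) * (1 - y\<^sup>2/3) < exp (- y\<^sup>2 / 6) * exp (- y\<^sup>2 / 3)"
      by (intro mult_strict_left_mono) auto
    then have "0 < exp (- y\<^sup>2 / 2) - (exp (- y\<^sup>2 / 6) - y * exp (- y\<^sup>2 / 6) * (y / 3))"
      unfolding e by (simp add: algebra_simps power2_eq_square)
    then show "\<exists>d. (?G has_real_derivative d) (at y) \<and> 0 < d" using d by blast
  next
    show "continuous_on {0..x} ?G" by (intro continuous_intros Fcont) auto
  qed
  then show ?thesis by simp
qed



lemma Mgt:
  fixes x :: real assumes "x > 0"
  shows "1 < exp (x\<^sup>2/3 + x^4/90) * (1 - x\<^sup>2/3 + 2*x^4/45)"
proof -
  let ?M = "\<lambda>z::real. exp (z\<^sup>2/3 + z^4/90) * (1 - z\<^sup>2/3 + 2*z^4/45)"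
  have "?M 0 < ?M x"
  proof (rule DERIV_pos_imp_increasing_open[OF assms])
    fix y :: real assume y: "0 < y" "y < x"
    have d: "(?M has_real_derivative exp (y\<^sup>2/3 + y^4/90) * (2*y^5/135 + 4*y^7/2025)) (at y)"
      by (auto intro!: derivative_eq_intros) (simp add: field_simps eval_nat_numeral; algebra)
    have "0 < exp (y\<^sup>2/3 + y^4/90) * (2*y^5/135 + 4*y^7/2025)"
      using y by (intro mult_pos_pos add_pos_pos) auto
    then show "\<exists>d. (?M has_real_derivative d) (at y) \<and> 0 < d" using d by blast
  next
    show "continuous_on {0..x} ?M" by (intro continuous_intros) auto
  qed
  then show ?thesis by simp
qed

lemma upper:
  fixes x :: real assumes "x > 0"
  shows "integral {0..x} (\<lambda>t. exp (- t\<^sup>2 / 2)) < x * exp (- x\<^sup>2 / 6 + x ^ 4 / 90)"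
proof -
  let ?H = "\<lambda>z. z * exp (- z\<^sup>2 / 6 + z ^ 4 / 90) - integral {0..z} (\<lambda>t. exp (- t\<^sup>2 / 2))"
  have "?H 0 < ?H x"
  proof (rule DERIV_pos_imp_increasing_open[OF assms])
    fix y :: real assume y: "0 < y" "y < x"
    have d: "(?H has_real_derivative (exp (- y\<^sup>2 / 6 + y ^ 4 / 90) * (1 - y\<^sup>2/3 + 2*y^4/45) - exp (- y\<^sup>2 / 2))) (at y)"
    proof -
      have "((\<lambda>z. z * exp (- z\<^sup>2 / 6 + z ^ 4 / 90)) has_real_derivative (exp (- y\<^sup>2 / 6 + y ^ 4 / 90) * (1 - y\<^sup>2/3 + 2*y^4/45))) (at y)"
        by (auto intro!: derivative_eq_intros) (simp add: field_simps eval_nat_numeral; algebra)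
      from DERIV_diff[OF this Fderiv[OF y(1)]] show ?thesis .
    qed
    have e: "exp (- y\<^sup>2 / 6 + y ^ 4 / 90) = exp (- y\<^sup>2 / 2) * exp (y\<^sup>2/3 + y^4/90)"
      by (simp flip: exp_add)
    have "exp (- y\<^sup>2 / 2) * 1 < exp (- y\<^sup>2 / 2) * (exp (y\<^sup>2/3 + y^4/90) * (1 - y\<^sup>2/3 + 2*y^4/45))"
      using Mgt[OF y(1)] by (intro mult_strict_left_mono) auto
    then have "0 < exp (- y\<^sup>2 / 6 + y ^ 4 / 90) * (1 - y\<^sup>2/3 + 2*y^4/45) - exp (- y\<^sup>2 / 2)"
      unfolding e by (simp add: mult.assoc)
    then show "\<exists>d. (?H has_real_derivative d) (at y) \<and> 0 < d" using d by blast
  next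
    show "continuous_on {0..x} ?H" by (intro continuous_intros Fcont) auto
  qed
  then show ?thesis by simp
qed


theorem lemma3p2:
  fixes x :: real
  assumes "x > 0"
  shows "x * exp (- x\<^sup>2 / 6) < sqrt (2 * pi) * (std_normal_cdf x - 1 / 2)
       \<and> sqrt (2 * pi) * (std_normal_cdf x - 1 / 2) < x * exp (- x\<^sup>2 / 6 + x ^ 4 / 90)"
  using repr[OF assms] lower[OF assms] upper[OF assms] by simp

end
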